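(* Consider $N$ learners $\mathcal V=\{1,\dots,N\}$ running the privacy-preserving decentralized aggregation algorithm described in the context for rounds $t=1,\dots,T$, with communication graphs $\mathcal G^{(t)}$ that are undirected, connected, and fixed within each round $t$. Let $A^{(t)}=[a_{ij}^{(t)}]\in\mathbb R^{N\times N}$ be the Metropolis–Hastings matrix of $\mathcal G^{(t)}$ (with $a_{ij}^{(t)}=0$ when $j\notin\bar{\mathcal N}_i^{(t)}$), and let $1_N$ be the all-ones vector in $\mathbb R^N$. Suppose the prime $p$ and the number of consensus iterations $K$ satisfy $$p>\max\Big\{N,\;1+2\cdot 10^{\sigma}N\max_{t,i,l}|\theta_{il}^{(t)}|\Big\},\qquad \max_{t}\,2p\sqrt N\,\big\|N(A^{(t)})^K-1_N1_N^T\big\|<1,$$ where the maximum is over $t\in\{1,\dots,T\}$, $i\in\mathcal V$, $l\in\{1,\dots,n\}$, and $\|\cdot\|$ is the $\ell_2$ (spectral) norm of a matrix. Then $\tilde\theta_i^{(t)}=\theta^{(t)}=\sum_{j\in\mathcal V}w_j\theta_j^{(t)}$ for all $i\in\mathcal V$ and all $t\in\{1,\dots,T\}$.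
   Context: Setting. There are $N$ learners $\mathcal V=\{1,\dots,N\}$ and a model dimension $n$. Each learner $i$ has a fixed weight $w_i\in(0,1]$. In each round $t\in\{1,\dots,T\}$ each learner $i$ holds a local model $\theta_i^{(t)}=(\theta_{i1}^{(t)},\dots,\theta_{in}^{(t)})\in\mathbb R^n$ (produced by arbitrary local training), and the desired global model is $\theta^{(t)}=\sum_{i\in\mathcal V}w_i\theta_i^{(t)}$. Put $\bar\theta_i^{(t)}(0)=w_i\theta_i^{(t)}$. A precision level $\sigma\in\mathbb N$ is fixed: all real numbers are kept to $\sigma$ fractional digits, so in particular $10^\sigma\bar\theta_{il}^{(t)}(0)\in\mathbb Z$. In round $t$ the communication graph is $\mathcal G^{(t)}=(\mathcal V,\mathcal E^{(t)})$; $\mathcal N_i^{(t)}=\{j\neq i:(i,j)\in\mathcal E^{(t)}\}$ and $\bar{\mathcal N}_i^{(t)}=\mathcal N_i^{(t)}\cup\{i\}$. Algorithm (parameters: a prime $p$ and positive integers $T,K$, agreed by all learners). In each round $t$: (1) Metropolis–Hastings weights: each learner $i$ sets $a_{ij}^{(t)}=1/(\max\{|\mathcal N_i^{(t)}|,|\mathcal N_j^{(t)}|\}+1)$ for $j\in\mathcal N_i^{(t)}$, $a_{ii}^{(t)}=1-\sum_{j\in\mathcal N_i^{(t)}}a_{ij}^{(t)}$, and $a_{ij}^{(t)}=0$ otherwise. (2) Share generation: for each $j\in\bar{\mathcal N}_i^{(t)}$ learner $i$ computes $\delta_j=\prod_{r\in\bar{\mathcal N}_i^{(t)},r\ne j}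 r\,(r-j)^{-1}\bmod p$ (inverses in $\mathbb Z_p$). For each $l\in\{1,\dots,n\}$, with $\tau=|\mathcal N_i^{(t)}|$, learner $i$ picks fresh independent $c_1,\dots,c_\tau\in\mathbb Z_p$ uniformly at random with $c_\tau\ne0$, forms $H(\eta)=10^\sigma\bar\theta_{il}^{(t)}(0)+c_1\eta+\dots+c_\tau\eta^\tau$, sets $\mathcal H_{il}^{j(t)}=H(j)\bmod p$ and $\mathcal S_{il}^{j(t)}=\mathcal H_{il}^{j(t)}\delta_j\bmod p$ for $j\in\bar{\mathcal N}_i^{(t)}$. It sends $\mathcal S_i^{j(t)}=(\mathcal S_{il}^{j(t)})_{l=1}^n$ to each neighbor $j\in\mathcal N_i^{(t)}$ and keeps $\mathcal S_i^{i(t)}$. (3) Each learner $i$ forms $s_i^{(t)}(0)=\sum_{j\in\bar{\mathcal N}_i^{(t)}}\mathcal S_j^{i(t)}\bmod p$ (componentwise, values in $\{0,\dots,p-1\}$) and sends it to its neighbors. (4) For $k=0,\dots,K-1$ each learner $i$ computes, in real arithmetic, $s_i^{(t)}(k+1)=a_{ii}^{(t)}s_i^{(t)}(k)+\sum_{j\in\mathcal N_i^{(t)}}a_{ij}^{(t)}s_j^{(t)}(k)$ and sends it to its neighbors. (5) Each learner $i$ sets, for each $l$, $z_{il}^{(t)}=\lfloor N s_{il}^{(t)}(K)\rceil\bmod p$, where $\lfloor a\rceil$ is rounding to the nearest integer ($\lfloor a\rceil=\lfloor a\rfloor$ if $a-\lfloor a\rfloor<0.5$, else $\lceil a\rceil$),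 and $\tilde\theta_{il}^{(t)}=z_{il}^{(t)}/10^\sigma$ if $0\le z_{il}^{(t)}\le (p-1)/2$, $\tilde\theta_{il}^{(t)}=(z_{il}^{(t)}-p)/10^\sigma$ if $(p+1)/2\le z_{il}^{(t)}<p$; it sets $\tilde\theta_i^{(t)}=(\tilde\theta_{il}^{(t)})_{l=1}^n$ (used as its initial model for the next round's local training). *)

theory Defs
  imports "HOL-Analysis.Analysis" "HOL-Number_Theory.Number_Theory"
begin

text \<open>Learners are labelled 1..N.  A round's communication graph is given by an edge
relation E on the labels; neighbourhoods exclude the learner itself.\<close>

definition nbrs :: "nat \<Rightarrow> (nat \<Rightarrow> nat \<Rightarrow> bool) \<Rightarrow> nat \<Rightarrow> nat set" where
  "nbrs N E i = {j \<in> {1..N}. j \<noteq> i \<and> E i j}"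

definition cnbrs :: "nat \<Rightarrow> (nat \<Rightarrow> nat \<Rightarrow> bool) \<Rightarrow> nat \<Rightarrow> nat set" where
  "cnbrs N E i = insert i (nbrs N E i)"

definition undirected_connected :: "nat \<Rightarrow> (nat \<Rightarrow> nat \<Rightarrow> bool) \<Rightarrow> bool" where
  "undirected_connected N E \<longleftrightarrow>
     (\<forall>i j. E i j = E j i) \<and>
     (\<forall>i\<in>{1..N}. \<forall>j\<in>{1..N}.
        (\<lambda>x y. x \<in> {1..N} \<and> y \<in> {1..N} \<and> x \<noteq> y \<and> E x y)\<^sup>*\<^sup>* i j)"

definition mh :: "nat \<Rightarrow> (nat \<Rightarrow> nat \<Rightarrow> bool) \<Rightarrow> nat \<Rightarrow> nat \<Rightarrow> real" where
  "mh N E i j =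
    (if j \<in> nbrs N E i then 1 / (real (max (card (nbrs N E i)) (card (nbrs N E j))) + 1)
     else if j = i then
       1 - (\<Sum>r\<in>nbrs N E i. 1 / (real (max (card (nbrs N E i)) (card (nbrs N E r))) + 1))
     else 0)"

text \<open>Matrices indexed by {1..N}: powers and the l2 operator (spectral) norm.\<close>
fun mat_pow :: "nat \<Rightarrow> (nat \<Rightarrow> nat \<Rightarrow> real) \<Rightarrow> nat \<Rightarrow> nat \<Rightarrow> nat \<Rightarrow> real" where
  "mat_pow N A 0 = (\<lambda>i j. if i = j then 1 else 0)"
| "mat_pow N A (Suc k) = (\<lambda>i j. \<Sum>r=1..N. A i r * mat_pow N A k r j)"

definition spec_norm :: "nat \<Rightarrow> (nat \<Rightarrow> nat \<Rightarrow> real) \<Rightarrow> real" where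
  "spec_norm N M = Sup {sqrt (\<Sum>i=1..N. (\<Sum>j=1..N. M i j * x j)\<^sup>2) | x.
                          (\<Sum>j=1..N. (x j)\<^sup>2) \<le> 1}"

text \<open>Step (2): Lagrange coefficient delta_j computed by learner i, and the share S_il^j.
 Y i l is the integer 10^sigma * bar theta_il(0); c i l m (m = 1..tau) are the random coefficients.\<close>
definition lag_coeff :: "nat \<Rightarrow> nat \<Rightarrow> (nat \<Rightarrow> nat \<Rightarrow> bool) \<Rightarrow> nat \<Rightarrow> nat \<Rightarrow> int" where
  "lag_coeff p N E i j =
     (\<Prod>r\<in>cnbrs N E i - {j}. int r * modular_inverse (int p) (int r - int j)) mod int p"

definition share :: "nat \<Rightarrow> nat \<Rightarrow> (nat \<Rightarrow> nat \<Rightarrow> bool) \<Rightarrow> (nat \<Rightarrow> nat \<Rightarrow> int)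
                      \<Rightarrow> (nat \<Rightarrow> nat \<Rightarrow> nat \<Rightarrow> int) \<Rightarrow> nat \<Rightarrow> nat \<Rightarrow> nat \<Rightarrow> int" where
  "share p N E Y c i j l =
     (((Y i l + (\<Sum>m=1..card (nbrs N E i). c i l m * int j ^ m)) mod int p)
        * lag_coeff p N E i j) mod int p"

definition s0 :: "nat \<Rightarrow> nat \<Rightarrow> (nat \<Rightarrow> nat \<Rightarrow> bool) \<Rightarrow> (nat \<Rightarrow> nat \<Rightarrow> int)
                      \<Rightarrow> (nat \<Rightarrow> nat \<Rightarrow> nat \<Rightarrow> int) \<Rightarrow> nat \<Rightarrow> nat \<Rightarrow> int" where
  "s0 p N E Y c i l = (\<Sum>j\<in>cnbrs N E i. share p N E Y c j i l) mod int p"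

text \<open>Step (4): consensus iterations in real arithmetic (one coordinate).\<close>
fun cons_iter :: "nat \<Rightarrow> (nat \<Rightarrow> nat \<Rightarrow> bool) \<Rightarrow> (nat \<Rightarrow> real) \<Rightarrow> nat \<Rightarrow> nat \<Rightarrow> real" where
  "cons_iter N E s 0 i = s i"
| "cons_iter N E s (Suc k) i =
     mh N E i i * cons_iter N E s k i + (\<Sum>j\<in>nbrs N E i. mh N E i j * cons_iter N E s k j)"

text \<open>Step (5): rounding (floor (a + 1/2) is the paper's rounding), reduction mod p, decoding.\<close>
definition round_half_up :: "real \<Rightarrow> int" where
  "round_half_up a = \<lfloor>a + 1/2\<rfloor>"

definition decode :: "nat \<Rightarrow> nat \<Rightarrow> int \<Rightarrow> real" where
  "decode p \<sigma> z = (if real_of_int z \<le> (real p - 1) / 2 then real_of_int z / 10 ^ \<sigma>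
                    else (real_of_int z - real p) / 10 ^ \<sigma>)"

text \<open>Output tilde theta_il of learner i in a round with graph E, weighted local models
 W i l = w_i theta_il (= bar theta_il(0)), coefficients c.\<close>
definition alg_output :: "nat \<Rightarrow> nat \<Rightarrow> nat \<Rightarrow> nat \<Rightarrow> (nat \<Rightarrow> nat \<Rightarrow> bool) \<Rightarrow> (nat \<Rightarrow> nat \<Rightarrow> real)
                      \<Rightarrow> (nat \<Rightarrow> nat \<Rightarrow> nat \<Rightarrow> int) \<Rightarrow> nat \<Rightarrow> nat \<Rightarrow> real" where
  "alg_output N \<sigma> p K E W c i l =
     (let Y = (\<lambda>j l'. \<lfloor>10 ^ \<sigma> * W j l'\<rfloor>);
          sK = cons_iter N E (\<lambda>j. real_of_int (s0 p N E Y c j l)) K i;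
          z = round_half_up (real N * sK) mod int p
      in decode p \<sigma> z)"

end

theory Submission
  imports Defs "HOL-Computational_Algebra.Polynomial"
begin

lemma lagrange_real:
  fixes C :: "real set" and H :: "real poly"
  assumes fin: "finite C" and deg: "degree H < card C"
  shows "poly H x = (\<Sum>i\<in>C. poly H i * (\<Prod>r\<in>C-{i}. (x - r)/(i - r)))"
proof -
  define P where "P = (\<Sum>i\<in>C. Polynomial.smult (poly H i) (\<Prod>r\<in>C-{i}. Polynomial.smult (1/(i-r)) [:-r,1:]))"
  have evalP: "poly P y = (\<Sum>i\<in>C. poly H i * (\<Prod>r\<in>C-{i}. (y - r)/(i - r)))" for y
    unfolding P_def poly_sum poly_smult poly_prod by (simp add: field_simps)
  have degP: "degree P \<le> card C - 1"
    unfolding P_def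
  proof (rule degree_sum_le[OF fin])
    fix i assume "i \<in> C"
    have "degree (Polynomial.smult (poly H i) (\<Prod>r\<in>C-{i}. Polynomial.smult (1/(i-r)) [:-r,1:]))
          \<le> degree (\<Prod>r\<in>C-{i}. Polynomial.smult (1/(i-r)) [:-r,1:])" by simp
    also have "\<dots> \<le> (\<Sum>r\<in>C-{i}. degree (Polynomial.smult (1/(i-r)) [:-r,1:]))"
      using degree_prod_sum_le[of "C-{i}" "\<lambda>r. Polynomial.smult (1/(i-r)) [:-r,1:]"] fin by (simp add: o_def)
    also have "\<dots> \<le> (\<Sum>r\<in>C-{i}. 1)"
      by (intro sum_mono) (simp add: degree_smult_le)
    also have "\<dots> = card C - 1" using fin \<open>i\<in>C\<close> by simp
    finally show "degree (Polynomial.smult (poly H i) (\<Prod>r\<in>C-{i}. Polynomial.smult (1/(i-r)) [:-r,1:])) \<le> card C - 1" .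
  qed
  have agree: "poly P j = poly H j" if j: "j \<in> C" for j
  proof -
    have "poly P j = poly H j
        + (\<Sum>i\<in>C-{j}. poly H i * (\<Prod>r\<in>C-{i}. (j - r)/(i - r)))"
      unfolding evalP by (simp add: sum.remove[OF fin j])
    also have "(\<Sum>i\<in>C-{j}. poly H i * (\<Prod>r\<in>C-{i}. (j - r)/(i - r))) = 0"
    proof (intro sum.neutral ballI)
      fix i assume i: "i \<in> C - {j}"
      have "(\<Prod>r\<in>C-{i}. (j - r)/(i - r)) = 0"
        using fin i j by (intro prod_zero bexI[of _ j]) auto
      thus "poly H i * (\<Prod>r\<in>C-{i}. (j - r)/(i - r)) = 0" by simp
    qed
    finally show ?thesis by simp
  qed
  have "P = H"
    by (rule poly_eqI_degree[of C]) (use agree degP deg in auto)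
  hence "poly H x = poly P x" by simp
  thus ?thesis using evalP by simp
qed

lemma lagrange_int:
  fixes C :: "nat set"
  assumes fin: "finite C" and nz: "0 \<notin> C" and m: "m < card C"
  shows "(\<Sum>i\<in>C. int i ^ m * (\<Prod>r\<in>C-{i}. int r) * (\<Prod>k\<in>C-{i}. (\<Prod>r\<in>C-{k}. int r - int k)))
         = (if m = 0 then (\<Prod>k\<in>C. \<Prod>r\<in>C-{k}. int r - int k) else 0)"
proof -
  define d where "d k = (\<Prod>r\<in>C-{k}. real r - real k)" for k
  have dnz: "d k \<noteq> 0" if "k \<in> C" for k
    unfolding d_def using fin by (subst prod_zero_iff) auto
  have inj: "inj_on real C" by (auto simp: inj_on_def)
  have cardC: "card (real ` C) = card C" using card_image[OF inj] .
  have degm: "degree (Polynomial.monom (1::real) m) < card (real ` C)" using m cardC by (simp add: degree_monom_eq)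
  have "poly (Polynomial.monom (1::real) m) 0 = (\<Sum>i\<in>real ` C. poly (Polynomial.monom 1 m) i * (\<Prod>r\<in>real ` C-{i}. (0 - r)/(i - r)))"
    by (rule lagrange_real) (use fin degm in auto)
  also have "\<dots> = (\<Sum>i\<in>C. real i ^ m * (\<Prod>r\<in>real ` C-{real i}. (0 - r)/(real i - r)))"
    by (simp add: sum.reindex[OF inj] poly_monom)
  also have "\<dots> = (\<Sum>i\<in>C. real i ^ m * (\<Prod>r\<in>C-{i}. real r) / d i)"
  proof (intro sum.cong refl)
    fix i assume i: "i \<in> C"
    have e: "real ` C - {real i} = real ` (C - {i})" by auto
    have inj2: "inj_on real (C - {i})" by (auto simp: inj_on_def)
    have "(\<Prod>r\<in>real ` C-{real i}. (0 - r)/(real i - r)) = (\<Prod>r\<in>C-{i}. real r / (real r - real i))"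
      unfolding e prod.reindex[OF inj2] by (intro prod.cong refl) (auto simp: field_simps)
    also have "\<dots> = (\<Prod>r\<in>C-{i}. real r) / d i"
      unfolding d_def by (rule prod_dividef)
    finally show "real i ^ m * (\<Prod>r\<in>real ` C-{real i}. (0 - r)/(real i - r)) = real i ^ m * (\<Prod>r\<in>C-{i}. real r) / d i"
      by simp
  qed
  finally have R: "(0::real) ^ m = (\<Sum>i\<in>C. real i ^ m * (\<Prod>r\<in>C-{i}. real r) / d i)"
    by (simp add: poly_monom)
  define D where "D = (\<Prod>k\<in>C. d k)"
  have Dsplit: "D = d i * (\<Prod>k\<in>C-{i}. d k)" if "i \<in> C" for i
    unfolding D_def using prod.remove[OF fin that] .
  have "(0::real) ^ m * D = (\<Sum>i\<in>C. real i ^ m * (\<Prod>r\<in>C-{i}. real r) / d i * D)"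
    unfolding R sum_distrib_right ..
  also have "\<dots> = (\<Sum>i\<in>C. real i ^ m * (\<Prod>r\<in>C-{i}. real r) * (\<Prod>k\<in>C-{i}. d k))"
    by (intro sum.cong refl) (simp add: Dsplit dnz)
  finally have R2: "(0::real) ^ m * D = (\<Sum>i\<in>C. real i ^ m * (\<Prod>r\<in>C-{i}. real r) * (\<Prod>k\<in>C-{i}. d k))" .
  have "real_of_int (\<Sum>i\<in>C. int i ^ m * (\<Prod>r\<in>C-{i}. int r) * (\<Prod>k\<in>C-{i}. (\<Prod>r\<in>C-{k}. int r - int k)))
        = real_of_int (if m = 0 then (\<Prod>k\<in>C. \<Prod>r\<in>C-{k}. int r - int k) else 0)"
    using R2 by (cases "m = 0") (simp_all add: D_def d_def power_0_left)
  thus ?thesis by (simp only: of_int_eq_iff)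
qed

lemma coprime_diff_p:
  fixes p :: nat and x :: int
  assumes "prime p" "x \<noteq> 0" "\<bar>x\<bar> < int p"
  shows "coprime x (int p)"
proof -
  have pi: "prime (int p)" using assms(1) by (simp add: prime_nat_int_transfer)
  have "\<not> int p dvd x"
  proof
    assume "int p dvd x"
    from dvd_imp_le_int[OF assms(2) this] assms(3) show False by simp
  qed
  then have "coprime (int p) x" by (rule prime_imp_coprime[OF pi])
  thus ?thesis by (simp add: coprime_commute)
qed

lemma lagrange_modp:
  fixes C :: "nat set" and p :: nat
  assumes pr: "prime p" and fin: "finite C" and nz: "0 \<notin> C" and lt: "\<forall>r\<in>C. r < p"
    and m: "m < card C"
  shows "[(\<Sum>i\<in>C. int i ^ m * (\<Prod>r\<in>C-{i}. int r * modular_inverse (int p) (int r - int i)))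
          = (if m = 0 then 1 else 0)] (mod int p)"
proof -
  define d where "d k = (\<Prod>r\<in>C-{k}. int r - int k)" for k
  define q where "q i = (\<Prod>r\<in>C-{i}. int r)" for i
  define \<delta> where "\<delta> i = (\<Prod>r\<in>C-{i}. int r * modular_inverse (int p) (int r - int i))" for i
  define D where "D = (\<Prod>k\<in>C. d k)"
  have cop: "coprime (int r - int k) (int p)" if "r \<in> C" "k \<in> C" "r \<noteq> k" for r k
  proof -
    have "r < p" "k < p" using that lt by auto
    thus ?thesis using that by (intro coprime_diff_p[OF pr]) auto
  qed
  have copd: "coprime (d k) (int p)" if "k \<in> C" for k
    unfolding d_def using that by (intro prod_coprime_left cop) auto
  have copD: "coprime D (int p)" unfolding D_def by (intro prod_coprime_left copd)
  have hd: "[\<delta> i * d i = q i] (mod int p)" if i: "i \<in> C" for i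
  proof -
    have "\<delta> i * d i = (\<Prod>r\<in>C-{i}. int r * (modular_inverse (int p) (int r - int i) * (int r - int i)))"
      unfolding \<delta>_def d_def prod.distrib[symmetric] by (simp add: mult.assoc)
    also have "[\<dots> = (\<Prod>r\<in>C-{i}. int r * 1)] (mod int p)"
      by (intro cong_prod cong_mult cong_refl cong_modular_inverse2 cop) (use i in auto)
    finally show ?thesis by (simp add: q_def)
  qed
  have "(\<Sum>i\<in>C. int i ^ m * \<delta> i) * D = (\<Sum>i\<in>C. int i ^ m * (\<delta> i * d i) * (\<Prod>k\<in>C-{i}. d k))"
    unfolding sum_distrib_right D_def
    by (intro sum.cong refl) (simp add: prod.remove[OF fin] mult_ac)
  also have "[\<dots> = (\<Sum>i\<in>C. int i ^ m * q i * (\<Prod>k\<in>C-{i}. d k))] (mod int p)"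
    by (intro cong_sum cong_mult cong_refl hd)
  also have "(\<Sum>i\<in>C. int i ^ m * q i * (\<Prod>k\<in>C-{i}. d k)) = (if m = 0 then 1 else 0) * D"
    using lagrange_int[OF fin nz m] by (simp add: q_def d_def D_def)
  finally have "[(\<Sum>i\<in>C. int i ^ m * \<delta> i) * D = (if m = 0 then 1 else 0) * D] (mod int p)" .
  hence "[(\<Sum>i\<in>C. int i ^ m * \<delta> i) = (if m = 0 then 1 else 0)] (mod int p)"
    using cong_mult_rcancel[OF copD] by blast
  thus ?thesis by (simp add: \<delta>_def)
qed

lemma cnbrs_sub: "i \<in> {1..N} \<Longrightarrow> cnbrs N E i \<subseteq> {1..N}"
  by (auto simp: cnbrs_def nbrs_def)

lemma cnbrs_eq: "i \<in> {1..N} \<Longrightarrow> cnbrs N E i = {j \<in> {1..N}. j = i \<or> (j \<noteq> i \<and> E i j)}"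
  by (auto simp: cnbrs_def nbrs_def)

lemma card_cnbrs: "card (cnbrs N E i) = card (nbrs N E i) + 1"
proof -
  have "finite (nbrs N E i)" "i \<notin> nbrs N E i" by (auto simp: nbrs_def)
  thus ?thesis by (simp add: cnbrs_def)
qed

lemma share_cong:
  "[share p N E Y c j i l = (Y j l + (\<Sum>m=1..card (nbrs N E j). c j l m * int i ^ m))
      * (\<Prod>r\<in>cnbrs N E j - {i}. int r * modular_inverse (int p) (int r - int i))] (mod int p)"
  unfolding share_def lag_coeff_def cong_def by (simp add: mod_mult_eq)

lemma per_owner:
  fixes p :: nat
  assumes pr: "prime p" and pN: "N < p" and j: "j \<in> {1..N}"
  shows "[(\<Sum>i\<in>cnbrs N E j. (Y j l + (\<Sum>m=1..card (nbrs N E j). c j l m * int i ^ m))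
      * (\<Prod>r\<in>cnbrs N E j - {i}. int r * modular_inverse (int p) (int r - int i)))
      = Y j l] (mod int p)"
proof -
  define C where "C = cnbrs N E j"
  define \<tau> where "\<tau> = card (nbrs N E j)"
  define \<delta> where "\<delta> i = (\<Prod>r\<in>C-{i}. int r * modular_inverse (int p) (int r - int i))" for i
  have sub: "C \<subseteq> {1..N}" unfolding C_def using cnbrs_sub[OF j] .
  have fin: "finite C" using sub finite_subset by blast
  have nz: "0 \<notin> C" using sub by auto
  have lt: "\<forall>r\<in>C. r < p" using sub pN by auto
  have cC: "card C = \<tau> + 1" unfolding C_def \<tau>_def by (rule card_cnbrs)
  have L: "[(\<Sum>i\<in>C. int i ^ m * \<delta> i) = (if m = 0 then 1 else 0)] (mod int p)" if "m \<le> \<tau>" for m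
    unfolding \<delta>_def using that cC by (intro lagrange_modp[OF pr fin nz lt]) auto
  have "(\<Sum>i\<in>C. (Y j l + (\<Sum>m=1..\<tau>. c j l m * int i ^ m)) * \<delta> i)
        = Y j l * (\<Sum>i\<in>C. int i ^ 0 * \<delta> i) + (\<Sum>m=1..\<tau>. c j l m * (\<Sum>i\<in>C. int i ^ m * \<delta> i))"
    by (simp add: algebra_simps sum.distrib sum_distrib_left sum_distrib_right sum.swap[of _ C])
  also have "[\<dots> = Y j l * 1 + (\<Sum>m=1..\<tau>. c j l m * 0)] (mod int p)"
  proof -
    have L0: "[(\<Sum>i\<in>C. int i ^ 0 * \<delta> i) = 1] (mod int p)" using L[of 0] by simp
    have L1: "[(\<Sum>i\<in>C. int i ^ m * \<delta> i) = 0] (mod int p)" if "m \<in> {1..\<tau>}" for m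
      using L[of m] that by simp
    show ?thesis
      by (intro cong_add cong_mult cong_refl cong_sum L0 L1)
  qed
  finally show ?thesis by (simp add: C_def \<tau>_def \<delta>_def)
qed

lemma shamir_sum:
  fixes p :: nat
  assumes pr: "prime p" and pN: "N < p" and sym: "\<forall>i j. E i j = E j i"
  shows "[(\<Sum>i=1..N. s0 p N E Y c i l) = (\<Sum>j=1..N. Y j l)] (mod int p)"
proof -
  define f where "f j i = (Y j l + (\<Sum>m=1..card (nbrs N E j). c j l m * int i ^ m))
      * (\<Prod>r\<in>cnbrs N E j - {i}. int r * modular_inverse (int p) (int r - int i))" for j i
  define R where "R i j = (j = i \<or> (j \<noteq> i \<and> E i j))" for i j
  have Rs: "R i j = R j i" for i j using sym unfolding R_def by auto
  have step: "(\<Sum>j\<in>cnbrs N E i. g j) = (\<Sum>j=1..N. if R i j then g j else 0)" if "i \<in> {1..N}" for i and g :: "nat \<Rightarrow> int"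
  proof -
    have "cnbrs N E i = {j\<in>{1..N}. R i j}" using cnbrs_eq[OF that] by (simp add: R_def)
    thus ?thesis by (simp only: sum.inter_filter[OF finite_atLeastAtMost])
  qed
  have "[(\<Sum>i=1..N. s0 p N E Y c i l) = (\<Sum>i=1..N. \<Sum>j\<in>cnbrs N E i. share p N E Y c j i l)] (mod int p)"
    unfolding s0_def by (intro cong_sum) (simp add: cong_def)
  also have "[(\<Sum>i=1..N. \<Sum>j\<in>cnbrs N E i. share p N E Y c j i l) = (\<Sum>i=1..N. \<Sum>j\<in>cnbrs N E i. f j i)] (mod int p)"
    unfolding f_def by (intro cong_sum share_cong)
  also have "(\<Sum>i=1..N. \<Sum>j\<in>cnbrs N E i. f j i) = (\<Sum>i=1..N. \<Sum>j=1..N. if R i j then f j i else 0)"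
    by (intro sum.cong refl step) 
  also have "\<dots> = (\<Sum>j=1..N. \<Sum>i=1..N. if R j i then f j i else 0)"
    by (subst sum.swap) (simp add: Rs)
  also have "\<dots> = (\<Sum>j=1..N. \<Sum>i\<in>cnbrs N E j. f j i)"
    by (intro sum.cong refl step[symmetric])
  also have "[\<dots> = (\<Sum>j=1..N. Y j l)] (mod int p)"
    unfolding f_def by (intro cong_sum per_owner[OF pr pN]) auto
  finally show ?thesis .
qed

lemma mh_row:
  assumes i: "i \<in> {1..N}"
  shows "mh N E i i * x i + (\<Sum>j\<in>nbrs N E i. mh N E i j * x j) = (\<Sum>r=1..N. mh N E i r * x r)"
proof -
  have nsub: "nbrs N E i \<subseteq> {1..N} - {i}" by (auto simp: nbrs_def)
  have "(\<Sum>r=1..N. mh N E i r * x r) = mh N E i i * x i + (\<Sum>r\<in>{1..N}-{i}. mh N E i r * x r)"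
    using i by (simp add: sum.remove)
  also have "(\<Sum>r\<in>{1..N}-{i}. mh N E i r * x r) = (\<Sum>j\<in>nbrs N E i. mh N E i j * x j)"
    by (rule sum.mono_neutral_right) (use nsub in \<open>auto simp: mh_def\<close>)
  finally show ?thesis by simp
qed

lemma cons_mat:
  assumes i: "i \<in> {1..N}"
  shows "cons_iter N E s k i = (\<Sum>j=1..N. mat_pow N (mh N E) k i j * s j)"
  using i
proof (induction k arbitrary: i)
  case 0
  then show ?case by (simp add: if_distrib[of "\<lambda>x. x * _"] cong: if_cong)
next
  case (Suc k)
  have "cons_iter N E s (Suc k) i = (\<Sum>r=1..N. mh N E i r * cons_iter N E s k r)"
    using mh_row[OF Suc.prems] by simp
  also have "\<dots> = (\<Sum>r=1..N. mh N E i r * (\<Sum>j=1..N. mat_pow N (mh N E) k r j * s j))"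
    by (intro sum.cong refl) (simp add: Suc.IH)
  also have "\<dots> = (\<Sum>j=1..N. mat_pow N (mh N E) (Suc k) i j * s j)"
    by (simp add: sum_distrib_left sum_distrib_right mult_ac; rule sum.swap)
  finally show ?case .
qed

lemma spec_facts:
  fixes M :: "nat \<Rightarrow> nat \<Rightarrow> real"
  assumes i: "i \<in> {1..N}"
  shows "spec_norm N M \<ge> 0"
    and "\<bar>\<Sum>j=1..N. M i j * x j\<bar> \<le> spec_norm N M * sqrt (\<Sum>j=1..N. (x j)\<^sup>2)"
proof -
  define S where "S = {sqrt (\<Sum>i=1..N. (\<Sum>j=1..N. M i j * x j)\<^sup>2) | x. (\<Sum>j=1..N. (x j)\<^sup>2) \<le> 1}"
  have sn: "spec_norm N M = Sup S" unfolding spec_norm_def S_def ..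
  define B where "B = sqrt (\<Sum>i=1..N. (\<Sum>j=1..N. \<bar>M i j\<bar>)\<^sup>2)"
  have bdd: "bdd_above S"
  proof (rule bdd_aboveI[of _ B])
    fix v assume "v \<in> S"
    then obtain y where v: "v = sqrt (\<Sum>i=1..N. (\<Sum>j=1..N. M i j * y j)\<^sup>2)"
      and y: "(\<Sum>j=1..N. (y j)\<^sup>2) \<le> 1" unfolding S_def by blast
    have yb: "\<bar>y j\<bar> \<le> 1" if "j \<in> {1..N}" for j
    proof -
      have "(y j)\<^sup>2 \<le> (\<Sum>j=1..N. (y j)\<^sup>2)"
        by (rule member_le_sum) (use that in auto)
      hence "(y j)\<^sup>2 \<le> 1" using y by simp
      thus ?thesis by (simp add: abs_square_le_1)
    qed
    have "(\<Sum>j=1..N. M i j * y j)\<^sup>2 \<le> (\<Sum>j=1..N. \<bar>M i j\<bar>)\<^sup>2" for i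
    proof -
      have "\<bar>\<Sum>j=1..N. M i j * y j\<bar> \<le> (\<Sum>j=1..N. \<bar>M i j * y j\<bar>)" by (rule sum_abs)
      also have "\<dots> \<le> (\<Sum>j=1..N. \<bar>M i j\<bar>)"
        by (intro sum_mono) (use yb in \<open>auto simp: abs_mult intro: mult_left_le\<close>)
      finally have "\<bar>\<Sum>j=1..N. M i j * y j\<bar> \<le> \<bar>\<Sum>j=1..N. \<bar>M i j\<bar>\<bar>" by simp
      thus ?thesis by (simp only: abs_le_square_iff)
    qed
    hence "(\<Sum>i=1..N. (\<Sum>j=1..N. M i j * y j)\<^sup>2) \<le> (\<Sum>i=1..N. (\<Sum>j=1..N. \<bar>M i j\<bar>)\<^sup>2)"
      by (intro sum_mono)
    thus "v \<le> B" unfolding v B_def by (rule real_sqrt_le_mono)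
  qed
  have mem: "sqrt (\<Sum>i=1..N. (\<Sum>j=1..N. M i j * y j)\<^sup>2) \<le> spec_norm N M"
    if "(\<Sum>j=1..N. (y j)\<^sup>2) \<le> 1" for y
    unfolding sn by (rule cSup_upper[OF _ bdd]) (use that in \<open>auto simp: S_def\<close>)
  show nn: "spec_norm N M \<ge> 0" using mem[of "\<lambda>_. 0"] by simp
  define nx where "nx = sqrt (\<Sum>j=1..N. (x j)\<^sup>2)"
  show "\<bar>\<Sum>j=1..N. M i j * x j\<bar> \<le> spec_norm N M * sqrt (\<Sum>j=1..N. (x j)\<^sup>2)"
  proof (cases "nx = 0")
    case True
    hence "(\<Sum>j=1..N. (x j)\<^sup>2) = 0" unfolding nx_def by simp
    hence "\<forall>j\<in>{1..N}. (x j)\<^sup>2 = 0" by (subst (asm) sum_nonneg_eq_0_iff) auto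
    hence "(\<Sum>j=1..N. M i j * x j) = 0" by simp
    moreover have "0 \<le> spec_norm N M * sqrt (\<Sum>j=1..N. (x j)\<^sup>2)"
      by (intro mult_nonneg_nonneg nn real_sqrt_ge_zero sum_nonneg) simp
    ultimately show ?thesis by simp
  next
    case False
    have sp: "(\<Sum>j=1..N. (x j)\<^sup>2) > 0"
      using False unfolding nx_def by (metis order_le_less real_sqrt_zero sum_nonneg zero_le_power2)
    have nxp: "nx > 0" using sp unfolding nx_def by simp
    define y where "y j = x j / nx" for j
    have "(\<Sum>j=1..N. (y j)\<^sup>2) = (\<Sum>j=1..N. (x j)\<^sup>2) / nx\<^sup>2"
      unfolding y_def by (simp add: power_divide sum_divide_distrib)
    also have "\<dots> = 1" using sp unfolding nx_def by simp
    finally have "sqrt (\<Sum>i=1..N. (\<Sum>j=1..N. M i j * y j)\<^sup>2) \<le> spec_norm N M" by (intro mem) simp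
    moreover have "\<bar>\<Sum>j=1..N. M i j * y j\<bar> \<le> sqrt (\<Sum>i=1..N. (\<Sum>j=1..N. M i j * y j)\<^sup>2)"
    proof -
      have "(\<Sum>j=1..N. M i j * y j)\<^sup>2 \<le> (\<Sum>i=1..N. (\<Sum>j=1..N. M i j * y j)\<^sup>2)"
        by (rule member_le_sum) (use i in auto)
      from real_sqrt_le_mono[OF this] show ?thesis by simp
    qed
    moreover have "(\<Sum>j=1..N. M i j * y j) = (\<Sum>j=1..N. M i j * x j) / nx"
      unfolding y_def by (simp add: sum_divide_distrib)
    ultimately have "\<bar>\<Sum>j=1..N. M i j * x j\<bar> / nx \<le> spec_norm N M" using nxp by simp
    thus ?thesis using nxp unfolding nx_def[symmetric] by (simp add: field_simps)
  qed
qed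

lemma round_eq:
  assumes "\<bar>a - real_of_int S\<bar> < 1/2"
  shows "round_half_up a = S"
proof -
  have "real_of_int S \<le> a + 1/2" "a + 1/2 < real_of_int S + 1" using assms unfolding abs_less_iff by linarith+
  thus ?thesis unfolding round_half_up_def by (intro floor_unique) auto
qed

lemma decode_eq:
  fixes p :: nat and V :: int
  assumes b: "\<bar>real_of_int V\<bar> < (real p - 1) / 2"
  shows "decode p \<sigma> (V mod int p) = real_of_int V / 10 ^ \<sigma>"
proof (cases "V \<ge> 0")
  case True
  have p0: "real p \<ge> 0" by simp
  have "real_of_int V < real p" using b True p0 by (auto simp: abs_less_iff)
  hence "V < int p" by (metis of_int_less_iff of_int_of_nat_eq)
  hence "V mod int p = V" using True by simp
  thus ?thesis using b True by (simp add: decode_def)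
next
  case False
  have p0: "real p \<ge> 0" by simp
  have r1: "0 \<le> real_of_int V + real p" using b False p0 by (auto simp: abs_less_iff)
  have r2: "0 \<le> V + int p" using r1 by (metis of_int_0_le_iff of_int_add of_int_of_nat_eq)
  have "V mod int p = (V + int p) mod int p" by simp
  also have "(V + int p) mod int p = V + int p" using r2 False by (intro mod_pos_pos_trivial) auto
  finally have e: "V mod int p = V + int p" .
  have "\<not> real_of_int (V + int p) \<le> (real p - 1) / 2" using b False unfolding abs_less_iff by simp
  thus ?thesis unfolding e decode_def by simp
qed

theorem theorem6p1:
  fixes N n T K \<sigma> p :: nat
    and w :: "nat \<Rightarrow> real"
    and \<theta> :: "nat \<Rightarrow> nat \<Rightarrow> nat \<Rightarrow> real"
    and E :: "nat \<Rightarrow> nat \<Rightarrow> nat \<Rightarrow> bool"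
    and c :: "nat \<Rightarrow> nat \<Rightarrow> nat \<Rightarrow> nat \<Rightarrow> int"
  assumes p_prime: "prime p"
    and T_pos: "0 < T" and K_pos: "0 < K"
    and w_range: "\<forall>i\<in>{1..N}. 0 < w i \<and> w i \<le> 1"
    and precision: "\<forall>t\<in>{1..T}. \<forall>i\<in>{1..N}. \<forall>l\<in>{1..n}. 10 ^ \<sigma> * (w i * \<theta> t i l) \<in> \<int>"
    and graphs: "\<forall>t\<in>{1..T}. undirected_connected N (E t)"
    and coeffs: "\<forall>t\<in>{1..T}. \<forall>i\<in>{1..N}. \<forall>l\<in>{1..n}. \<forall>m\<in>{1..card (nbrs N (E t) i)}.
                   0 \<le> c t i l m \<and> c t i l m < int p"
    and coeff_top: "\<forall>t\<in>{1..T}. \<forall>i\<in>{1..N}. \<forall>l\<in>{1..n}.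
                   0 < card (nbrs N (E t) i) \<longrightarrow> c t i l (card (nbrs N (E t) i)) \<noteq> 0"
    and p_N: "N < p"
    and p_theta: "\<forall>t\<in>{1..T}. \<forall>i\<in>{1..N}. \<forall>l\<in>{1..n}.
                   1 + 2 * 10 ^ \<sigma> * real N * \<bar>\<theta> t i l\<bar> < real p"
    and p_K: "\<forall>t\<in>{1..T}. 2 * real p * sqrt (real N) *
                 spec_norm N (\<lambda>i j. real N * mat_pow N (mh N (E t)) K i j - 1) < 1"
  shows "\<forall>t\<in>{1..T}. \<forall>i\<in>{1..N}. \<forall>l\<in>{1..n}.
           alg_output N \<sigma> p K (E t) (\<lambda>j l'. w j * \<theta> t j l') (c t) i l
             = (\<Sum>j=1..N. w j * \<theta> t j l)"
proof (intro ballI)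
  fix t i l assume t: "t \<in> {1..T}" and i: "i \<in> {1..N}" and l: "l \<in> {1..n}"
  define E' where "E' = E t"
  define Y where "Y = (\<lambda>j l'. \<lfloor>10 ^ \<sigma> * (w j * \<theta> t j l')\<rfloor>)"
  define s where "s j = s0 p N E' Y (c t) j l" for j
  define P where "P = mat_pow N (mh N E') K"
  define S where "S = (\<Sum>j=1..N. s j)"
  define V where "V = (\<Sum>j=1..N. Y j l)"
  define M where "M = (\<lambda>i j. real N * mat_pow N (mh N (E t)) K i j - 1)"
  have Npos: "N > 0" using i by simp
  have pp: "p > 0" using p_prime prime_gt_0_nat by blast
  have out: "alg_output N \<sigma> p K (E t) (\<lambda>j l'. w j * \<theta> t j l') (c t) i l
     = decode p \<sigma> (round_half_up (real N * cons_iter N E' (\<lambda>j. real_of_int (s j)) K i) mod int p)"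
    unfolding alg_output_def Let_def Y_def s_def E'_def by simp
  have ci: "cons_iter N E' (\<lambda>j. real_of_int (s j)) K i = (\<Sum>j=1..N. P i j * s j)"
    unfolding P_def by (rule cons_mat[OF i])
  have diff: "real N * (\<Sum>j=1..N. P i j * s j) - real_of_int S = (\<Sum>j=1..N. M i j * s j)"
    by (simp add: S_def M_def P_def E'_def sum_distrib_left algebra_simps sum_subtractf)
  have sb: "0 \<le> s j" "s j < int p" for j
    unfolding s_def s0_def using pp by simp_all
  have "(\<Sum>j=1..N. (real_of_int (s j))\<^sup>2) \<le> (\<Sum>j=1..N. (real p)\<^sup>2)"
  proof (intro sum_mono)
    fix j
    have "0 \<le> real_of_int (s j)" "real_of_int (s j) \<le> real p" using sb[of j] by simp_all
    thus "(real_of_int (s j))\<^sup>2 \<le> (real p)\<^sup>2" by (intro power_mono) auto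
  qed
  hence "sqrt (\<Sum>j=1..N. (real_of_int (s j))\<^sup>2) \<le> sqrt (real N * (real p)\<^sup>2)"
    by (intro real_sqrt_le_mono) simp
  also have "\<dots> = sqrt (real N) * real p" by (simp add: real_sqrt_mult)
  finally have sq: "sqrt (\<Sum>j=1..N. (real_of_int (s j))\<^sup>2) \<le> sqrt (real N) * real p" .
  have nn: "spec_norm N M \<ge> 0" by (rule spec_facts(1)[OF i])
  have "\<bar>\<Sum>j=1..N. M i j * s j\<bar> \<le> spec_norm N M * sqrt (\<Sum>j=1..N. (real_of_int (s j))\<^sup>2)"
    by (rule spec_facts(2)[OF i])
  also have "\<dots> \<le> spec_norm N M * (sqrt (real N) * real p)"
    by (intro mult_left_mono sq nn)
  also have "\<dots> < 1/2" using p_K t unfolding M_def by (simp add: algebra_simps)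
  finally have err: "\<bar>real N * cons_iter N E' (\<lambda>j. real_of_int (s j)) K i - real_of_int S\<bar> < 1/2"
    unfolding ci diff .
  have rnd: "round_half_up (real N * cons_iter N E' (\<lambda>j. real_of_int (s j)) K i) = S"
    by (rule round_eq[OF err])
  have sym: "\<forall>i j. E' i j = E' j i" using graphs t unfolding E'_def undirected_connected_def by blast
  have "[S = V] (mod int p)"
    unfolding S_def V_def s_def by (rule shamir_sum[OF p_prime p_N sym])
  hence SV: "S mod int p = V mod int p" by (simp add: cong_def)
  have Yr: "real_of_int (Y j l) = 10 ^ \<sigma> * (w j * \<theta> t j l)" if j: "j \<in> {1..N}" for j
  proof -
    have "10 ^ \<sigma> * (w j * \<theta> t j l) \<in> \<int>" using precision t j l by blast
    then obtain z where z: "10 ^ \<sigma> * (w j * \<theta> t j l) = real_of_int z" by (auto elim: Ints_cases)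
    show ?thesis unfolding Y_def z by simp
  qed
  have Yb: "2 * real N * \<bar>real_of_int (Y j l)\<bar> < real p - 1" if j: "j \<in> {1..N}" for j
  proof -
    have w: "0 < w j" "w j \<le> 1" using w_range j by auto
    have "\<bar>real_of_int (Y j l)\<bar> = 10 ^ \<sigma> * (w j * \<bar>\<theta> t j l\<bar>)"
      using Yr[OF j] w by (simp add: abs_mult)
    also have "\<dots> \<le> 10 ^ \<sigma> * \<bar>\<theta> t j l\<bar>"
      by (intro mult_left_mono mult_left_le_one_le) (use w in auto)
    finally have "2 * real N * \<bar>real_of_int (Y j l)\<bar> \<le> 2 * real N * (10 ^ \<sigma> * \<bar>\<theta> t j l\<bar>)"
      by (intro mult_left_mono) auto
    also have "\<dots> < real p - 1" using p_theta t j l by (simp add: algebra_simps)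
    finally show ?thesis .
  qed
  have "2 * real N * \<bar>real_of_int V\<bar> \<le> (\<Sum>j=1..N. 2 * real N * \<bar>real_of_int (Y j l)\<bar>)"
  proof -
    have "\<bar>real_of_int V\<bar> \<le> (\<Sum>j=1..N. \<bar>real_of_int (Y j l)\<bar>)"
      unfolding V_def of_int_sum by (rule sum_abs)
    from mult_left_mono[OF this, of "2 * real N"] show ?thesis by (simp add: sum_distrib_left)
  qed
  also have "\<dots> < (\<Sum>j=1..N. real p - 1)"
    by (rule sum_strict_mono) (use Yb Npos in auto)
  finally have "2 * real N * \<bar>real_of_int V\<bar> < real N * (real p - 1)" by simp
  hence "real N * (2 * \<bar>real_of_int V\<bar>) < real N * (real p - 1)" by (simp add: mult_ac)
  hence "2 * \<bar>real_of_int V\<bar> < real p - 1" using Npos by (simp add: mult_less_cancel_left_pos)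
  hence Vb: "\<bar>real_of_int V\<bar> < (real p - 1) / 2" by simp
  have "real_of_int V / 10 ^ \<sigma> = (\<Sum>j=1..N. w j * \<theta> t j l)"
    unfolding V_def of_int_sum using Yr by (simp add: sum_divide_distrib)
  thus "alg_output N \<sigma> p K (E t) (\<lambda>j l'. w j * \<theta> t j l') (c t) i l = (\<Sum>j=1..N. w j * \<theta> t j l)"
    unfolding out rnd SV decode_eq[OF Vb] .
qed

end
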